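(* Let ${\mathcal{X}}:=(\mathbb{S}^2)^d$ and ${\mathcal{K}}:=(\mathbb{S}^2_+)^d$. Fix $\eta>0$, $\beta\in[0,1)$ and $\lambda_{\max}=\lambda_1\ge\lambda_2\ge\cdots\ge\lambda_d>0$. Define the linear operator ${\mathcal{T}}:{\mathcal{X}}\to{\mathcal{X}}$ blockwise by \[ ({\mathcal{T}}({\bm{W}}))_i={\bm{A}}_i{\bm{W}}_i{\bm{A}}_i^\top+\eta^2\Bigl(\lambda_i^2({\bm{W}}_i)_{11}+\sum_{j=1}^d\lambda_j^2({\bm{W}}_j)_{11}\Bigr){\bm{Q}},\quad i=1,\ldots,d, \] with ${\bm{A}}_i=\begin{bmatrix}1-\eta\lambda_i&-\beta\\ \eta\lambda_i&\beta\end{bmatrix}$, ${\bm{Q}}=\begin{bmatrix}1&-1\\-1&1\end{bmatrix}$, and define $S(\eta,\beta):=\sum_{i=1}^d\frac{\eta\lambda_i}{2(1-\beta)\left(1-\frac{\eta\lambda_i}{1-\beta^2}\right)}$. Then: (a) ${\mathcal{T}}({\mathcal{K}})\subseteq{\mathcal{K}}$; moreover ${\mathcal{T}}$ has an eigenvalue equal to its spectral radius $\rho({\mathcal{T}})$ with an associated eigenvector ${\bm{W}}^\star=({\bm{W}}_1^\star,\ldots,{\bm{W}}_d^\star)\in{\mathcal{K}}\setminus\{{\bm{0}}\}$, and $\rho({\mathcal{T}})\ge\eta^2\sum_{i=1}^d\lambda_i^2>0$ and $\sum_{i=1}^d({\bm{W}}_i^\star)_{11}>0$. (b) $\rho({\mathcal{T}})=1$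 if and only if $\eta\lambda_{\max}<1-\beta^2$ and $S(\eta,\beta)=1$. (c) $\rho({\mathcal{T}})<1$ if and only if $\eta\lambda_{\max}<1-\beta^2$ and $S(\eta,\beta)<1$.
   Context: $\mathbb{S}^2$ denotes the space of real symmetric $2\times2$ matrices and $\mathbb{S}^2_+$ the cone of positive semidefinite ones; $\rho(\cdot)$ denotes spectral radius. *)

theory Defs
  imports "HOL-Analysis.Analysis"
begin

text \<open>A 2x2 matrix given by its entries; index 1 is the first row/column,
  the other element of type 2 is the second.\<close>
definition mat2 :: "'a \<Rightarrow> 'a \<Rightarrow> 'a \<Rightarrow> 'a \<Rightarrow> 'a^2^2" where
  "mat2 a b c e = (\<chi> i j. if i = 1 then (if j = 1 then a else b) else (if j = 1 then c else e))"

definition smult2 :: "'a::times \<Rightarrow> 'a^2^2 \<Rightarrow> 'a^2^2" where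
  "smult2 c M = (\<chi> i j. c * M $ i $ j)"

definition Amat :: "real \<Rightarrow> real \<Rightarrow> real \<Rightarrow> 'a::{comm_ring_1,real_algebra_1}^2^2" where
  "Amat \<eta> \<beta> l = mat2 (of_real (1 - \<eta> * l)) (of_real (- \<beta>)) (of_real (\<eta> * l)) (of_real \<beta>)"

definition Qmat :: "'a::comm_ring_1^2^2" where
  "Qmat = mat2 1 (-1) (-1) 1"

text \<open>The operator T on d-tuples of 2x2 matrices, tuples indexed by 1..d
  (blocks outside 1..d are 0). Defined over real and complex scalars
  (the complex version is the complexification used for the spectral radius).\<close>
definition T_op :: "real \<Rightarrow> real \<Rightarrow> nat \<Rightarrow> (nat \<Rightarrow> real) \<Rightarrow>
    (nat \<Rightarrow> 'a::{comm_ring_1,real_algebra_1}^2^2) \<Rightarrow> nat \<Rightarrow> 'a^2^2" where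
  "T_op \<eta> \<beta> d lam W = (\<lambda>i. if i \<in> {1..d} then
      Amat \<eta> \<beta> (lam i) ** W i ** transpose (Amat \<eta> \<beta> (lam i))
      + smult2 (of_real (\<eta>^2) * (of_real ((lam i)^2) * W i $ 1 $ 1
                 + (\<Sum>j=1..d. of_real ((lam j)^2) * W j $ 1 $ 1))) Qmat
    else 0)"

definition sym_space :: "nat \<Rightarrow> (nat \<Rightarrow> 'a::zero^2^2) set" where
  "sym_space d = {W. \<forall>i. transpose (W i) = W i \<and> (i \<notin> {1..d} \<longrightarrow> W i = 0)}"

definition psd_cone :: "nat \<Rightarrow> (nat \<Rightarrow> real^2^2) set" where
  "psd_cone d = {W. W \<in> sym_space d \<and> (\<forall>i x. 0 \<le> x \<bullet> (W i *v x))}"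

definition spectral_radius_T :: "real \<Rightarrow> real \<Rightarrow> nat \<Rightarrow> (nat \<Rightarrow> real) \<Rightarrow> real" where
  "spectral_radius_T \<eta> \<beta> d lam = Sup {cmod \<mu> | \<mu>. \<exists>W :: nat \<Rightarrow> complex^2^2.
      W \<in> sym_space d \<and> (\<exists>i. W i \<noteq> 0) \<and> T_op \<eta> \<beta> d lam W = (\<lambda>i. smult2 \<mu> (W i))}"

definition S_fun :: "real \<Rightarrow> real \<Rightarrow> nat \<Rightarrow> (nat \<Rightarrow> real) \<Rightarrow> real" where
  "S_fun \<eta> \<beta> d lam = (\<Sum>i=1..d. \<eta> * lam i / (2 * (1 - \<beta>) * (1 - \<eta> * lam i / (1 - \<beta>^2))))"

end

theory Submission
  imports Defs
begin


lemma two_ne_one[simp]: "(2::2) \<noteq> 1" by (metis exhaust_2 num1_eq_iff one_neq_zero zero_neq_one numeral_One numeral_eq_iff semiring_norm(85))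

lemma mat2_nth[simp]:
  "mat2 a b c e $ 1 $ 1 = a" "mat2 a b c e $ 1 $ 2 = b"
  "mat2 a b c e $ 2 $ 1 = c" "mat2 a b c e $ 2 $ 2 = e"
  by (simp_all add: mat2_def)

lemma mat2_eq: "(M::'a^2^2) = N \<longleftrightarrow> M$1$1 = N$1$1 \<and> M$1$2 = N$1$2 \<and> M$2$1 = N$2$1 \<and> M$2$2 = N$2$2"
  by (auto simp: vec_eq_iff forall_2)

lemma qf: "(x::real^2) \<bullet> (W *v x) = W$1$1*x$1*x$1 + W$1$2*x$1*x$2 + W$2$1*x$2*x$1 + W$2$2*x$2*x$2"
  by (simp add: inner_vec_def matrix_vector_mult_def sum_2 algebra_simps)

lemma mm_nth: "((A::'a::comm_semiring_1^2^2) ** B) $ i $ j = A$i$1 * B$1$j + A$i$2 * B$2$j"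
  by (simp add: matrix_matrix_mult_def sum_2)

lemma tr_nth[simp]: "transpose A $ i $ j = A $ j $ i"
  by (simp add: transpose_def)

lemma smult2_nth[simp]: "smult2 c M $ i $ j = c * M $ i $ j"
  by (simp add: smult2_def)

lemma vec2_ex: "\<exists>x::real^2. x$1 = a \<and> x$2 = b"
  by (rule exI[of _ "\<chi> i. if i = 1 then a else b"]) simp

lemma qf_AWA: fixes A W :: "real^2^2"
  shows "x \<bullet> ((A ** W ** transpose A) *v x) = (transpose A *v x) \<bullet> (W *v (transpose A *v x))"
  by (simp add: inner_vec_def mm_nth matrix_vector_mult_def sum_2 algebra_simps)

lemma psd_qf: "W \<in> psd_cone d \<Longrightarrow> 0 \<le> x \<bullet> (W i *v x)"
  by (simp add: psd_cone_def)

lemma psd_11: "W \<in> psd_cone d \<Longrightarrow> 0 \<le> W i $ 1 $ 1"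
proof -
  assume "W \<in> psd_cone d"
  obtain x::"real^2" where x: "x$1 = 1" "x$2 = 0" using vec2_ex by blast
  have "0 \<le> x \<bullet> (W i *v x)" using psd_qf[OF \<open>W \<in> psd_cone d\<close>] .
  then show ?thesis by (simp add: qf x)
qed

lemma T_psd:
  assumes W: "W \<in> psd_cone d"
  shows "T_op \<eta> \<beta> d lam W \<in> psd_cone d"
proof -
  let ?T = "T_op \<eta> \<beta> d lam W"
  have sym: "\<And>i. transpose (W i) = W i" using W by (simp add: psd_cone_def sym_space_def)
  have c: "0 \<le> \<eta>^2 * ((lam i)^2 * W i $ 1 $ 1 + (\<Sum>j=1..d. (lam j)^2 * W j $ 1 $ 1))" for i
    using psd_11[OF W] by (intro mult_nonneg_nonneg add_nonneg_nonneg sum_nonneg) auto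
  have "transpose (?T i) = ?T i" for i
  proof -
    have "W i $ 1 $ 2 = W i $ 2 $ 1" using sym[of i] by (metis tr_nth)
    then show ?thesis by (simp add: T_op_def mat2_eq mm_nth Amat_def Qmat_def algebra_simps)
  qed
  moreover have "0 \<le> x \<bullet> (?T i *v x)" for i x
  proof (cases "i \<in> {1..d}")
    case True
    let ?A = "Amat \<eta> \<beta> (lam i) :: real^2^2"
    let ?c = "\<eta>^2 * ((lam i)^2 * W i $ 1 $ 1 + (\<Sum>j=1..d. (lam j)^2 * W j $ 1 $ 1))"
    have e: "?T i = ?A ** W i ** transpose ?A + smult2 ?c Qmat"
      using True by (simp add: T_op_def)
    have "x \<bullet> (?T i *v x) = x \<bullet> ((?A ** W i ** transpose ?A) *v x) + ?c * (x$1 - x$2)^2"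
      unfolding e by (simp add: qf Qmat_def algebra_simps power2_eq_square)
    also have "\<dots> \<ge> 0" unfolding qf_AWA using psd_qf[OF W] c[of i] by simp
    finally show ?thesis .
  qed (auto simp add: T_op_def)
  moreover have "i \<notin> {1..d} \<Longrightarrow> ?T i = 0" for i unfolding T_op_def by auto
  ultimately show ?thesis by (simp add: psd_cone_def sym_space_def)
qed



definition kf :: "real \<Rightarrow> real \<Rightarrow> real \<Rightarrow> real" where
  "kf \<beta> a \<mu> = \<mu> + \<beta> - (1 - a + \<beta>)^2 * \<mu> / (\<mu> + \<beta>)"
definition Df :: "real \<Rightarrow> real \<Rightarrow> real \<Rightarrow> real" where
  "Df \<beta> a \<mu> = (1 - \<beta>/\<mu>) * kf \<beta> a \<mu>"
definition Vblk :: "real \<Rightarrow> real \<Rightarrow> real \<Rightarrow> real \<Rightarrow> real^2^2" where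
  "Vblk \<beta> a \<mu> P = mat2 P ((1 - a + \<beta>) * P/(\<mu>+\<beta>) - P) ((1 - a + \<beta>) * P/(\<mu>+\<beta>)-P)
      (P/\<mu> - 2*((1 - a + \<beta>) * P/(\<mu>+\<beta>)) + P)"

lemma Df_alt:
  assumes "\<mu> > 0" "\<beta> \<ge> 0"
  shows "P * Df \<beta> a \<mu> = \<mu>*P - ((1-a+\<beta>)^2*P - 2*(1-a+\<beta>)*\<beta>*((1 - a + \<beta>) * P/(\<mu>+\<beta>)) + \<beta>^2*(P/\<mu>))"
proof -
  have p: "\<beta>*\<mu> + \<mu>*\<mu> > 0" using assms by (intro add_nonneg_pos) auto
  have "\<mu> + \<beta> \<noteq> 0" "\<mu> \<noteq> 0" "\<beta>*\<mu> + \<mu>*\<mu> \<noteq> 0" using assms p by auto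
  then show ?thesis unfolding Df_def kf_def by (simp add: field_simps) (simp add: algebra_simps power2_eq_square)
qed

lemma block_gen:
  assumes "\<mu> * F = P" "(\<mu>+\<beta>) * M = (1-\<eta>*l+\<beta>) * P"
    "c = \<mu>*P - ((1-\<eta>*l+\<beta>)^2*P - 2*(1-\<eta>*l+\<beta>)*\<beta>*M + \<beta>^2*F)"
  shows "Amat \<eta> \<beta> l ** mat2 P (M-P) (M-P) (F-2*M+P) ** transpose (Amat \<eta> \<beta> l) + smult2 c Qmat
     = \<mu> *\<^sub>R mat2 P (M-P) (M-P) (F-2*M+P)"
  unfolding mat2_eq using assms
  by (simp add: mm_nth Amat_def Qmat_def algebra_simps power2_eq_square)

lemma block_eig:
  assumes "\<mu> > 0" "\<beta> \<ge> 0"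
  shows "Amat \<eta> \<beta> l ** Vblk \<beta> (\<eta>*l) \<mu> P ** transpose (Amat \<eta> \<beta> l) + smult2 (P * Df \<beta> (\<eta>*l) \<mu>) Qmat
     = \<mu> *\<^sub>R Vblk \<beta> (\<eta>*l) \<mu> P"
  unfolding Vblk_def
  apply (rule block_gen)
  using assms by (auto simp: Df_alt)



definition re2 :: "complex^2^2 \<Rightarrow> real^2^2" where
  "re2 M = (\<chi> a b. Re (M $ a $ b))"
definition cx2 :: "real^2^2 \<Rightarrow> complex^2^2" where
  "cx2 M = (\<chi> a b. complex_of_real (M $ a $ b))"

lemma re2_nth[simp]: "re2 M $ a $ b = Re (M $ a $ b)" by (simp add: re2_def)
lemma cx2_nth[simp]: "cx2 M $ a $ b = complex_of_real (M $ a $ b)" by (simp add: cx2_def)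

lemma re2_blk:
  "re2 (smult2 \<omega> (Amat \<eta> \<beta> l ** W ** transpose (Amat \<eta> \<beta> l) + smult2 c Qmat))
   = Amat \<eta> \<beta> l ** re2 (smult2 \<omega> W) ** transpose (Amat \<eta> \<beta> l) + smult2 (Re (\<omega> * c)) Qmat"
  unfolding mat2_eq by (simp add: mm_nth Amat_def Qmat_def algebra_simps)

lemma T_out: "i \<notin> {1..d} \<Longrightarrow> T_op \<eta> \<beta> d lam W i = 0"
  unfolding T_op_def by auto

lemma T_in: "i \<in> {1..d} \<Longrightarrow> T_op \<eta> \<beta> d lam W i = Amat \<eta> \<beta> (lam i) ** W i ** transpose (Amat \<eta> \<beta> (lam i))
      + smult2 (of_real (\<eta>^2) * (of_real ((lam i)^2) * W i $ 1 $ 1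
                 + (\<Sum>j=1..d. of_real ((lam j)^2) * W j $ 1 $ 1))) Qmat"
  unfolding T_op_def by auto

lemma T_re:
  "T_op \<eta> \<beta> d lam (\<lambda>i. re2 (smult2 \<omega> (W i))) = (\<lambda>i. re2 (smult2 \<omega> (T_op \<eta> \<beta> d lam W i)))"
proof
  fix i
  show "T_op \<eta> \<beta> d lam (\<lambda>i. re2 (smult2 \<omega> (W i))) i = re2 (smult2 \<omega> (T_op \<eta> \<beta> d lam W i))"
  proof (cases "i \<in> {1..d}")
    case True
    have s: "Re (\<omega> * (of_real (\<eta>^2) * (of_real ((lam i)^2) * W i $ 1 $ 1 + (\<Sum>j=1..d. of_real ((lam j)^2) * W j $ 1 $ 1))))
      = \<eta>^2 * ((lam i)^2 * Re (\<omega> * W i $ 1 $ 1) + (\<Sum>j=1..d. (lam j)^2 * Re (\<omega> * W j $ 1 $ 1)))"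
    proof -
      have e: "\<omega> * (of_real (\<eta>^2) * (of_real ((lam i)^2) * W i $ 1 $ 1 + (\<Sum>j=1..d. of_real ((lam j)^2) * W j $ 1 $ 1)))
        = of_real (\<eta>^2) * (of_real ((lam i)^2) * (\<omega> * W i $ 1 $ 1) + (\<Sum>j=1..d. of_real ((lam j)^2) * (\<omega> * W j $ 1 $ 1)))"
        by (simp add: algebra_simps sum_distrib_left)
      have r: "\<And>r z. Re (complex_of_real r * z) = r * Re z" by simp
      show ?thesis by (simp only: e r plus_complex.sel Re_sum)
    qed
    show ?thesis using True
      unfolding T_op_def by (simp only: if_True re2_blk s) simp
  next
    case False then show ?thesis by (simp add: T_out vec_eq_iff)
  qed
qed



lemma T_cx:
  "T_op \<eta> \<beta> d lam (\<lambda>i. cx2 (X i)) = (\<lambda>i. cx2 (T_op \<eta> \<beta> d lam X i))"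
proof
  fix i
  show "T_op \<eta> \<beta> d lam (\<lambda>i. cx2 (X i)) i = cx2 (T_op \<eta> \<beta> d lam X i)"
  proof (cases "i \<in> {1..d}")
    case True
    show ?thesis using True unfolding T_in[OF True] mat2_eq
      by (simp add: mm_nth Amat_def Qmat_def)
  next
    case False then show ?thesis by (simp add: T_out vec_eq_iff)
  qed
qed

definition phi :: "real \<Rightarrow> real \<Rightarrow> nat \<Rightarrow> (nat \<Rightarrow> real) \<Rightarrow> real \<Rightarrow> real" where
  "phi \<eta> \<beta> d lam \<mu> = (\<Sum>j=1..d. (\<eta>*lam j)^2 / (Df \<beta> (\<eta>*lam j) \<mu> - (\<eta>*lam j)^2))"
definition Pv :: "real \<Rightarrow> real \<Rightarrow> (nat \<Rightarrow> real) \<Rightarrow> real \<Rightarrow> nat \<Rightarrow> real" where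
  "Pv \<eta> \<beta> lam \<mu> j = \<eta>^2 / (Df \<beta> (\<eta>*lam j) \<mu> - (\<eta>*lam j)^2)"
definition Vv :: "real \<Rightarrow> real \<Rightarrow> nat \<Rightarrow> (nat \<Rightarrow> real) \<Rightarrow> real \<Rightarrow> nat \<Rightarrow> real^2^2" where
  "Vv \<eta> \<beta> d lam \<mu> = (\<lambda>i. if i \<in> {1..d} then Vblk \<beta> (\<eta>*lam i) \<mu> (Pv \<eta> \<beta> lam \<mu> i) else 0)"

lemma Vv11: "i \<in> {1..d} \<Longrightarrow> Vv \<eta> \<beta> d lam \<mu> i $ 1 $ 1 = Pv \<eta> \<beta> lam \<mu> i"
  by (simp add: Vv_def Vblk_def)

lemma T_Vv:
  assumes mu: "\<mu> > 0" "\<beta> \<ge> 0" and D: "\<forall>j\<in>{1..d}. Df \<beta> (\<eta>*lam j) \<mu> > (\<eta>*lam j)^2"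
    and ph: "phi \<eta> \<beta> d lam \<mu> = 1"
  shows "T_op \<eta> \<beta> d lam (Vv \<eta> \<beta> d lam \<mu>) = (\<lambda>i. \<mu> *\<^sub>R Vv \<eta> \<beta> d lam \<mu> i)"
proof
  fix i
  show "T_op \<eta> \<beta> d lam (Vv \<eta> \<beta> d lam \<mu>) i = \<mu> *\<^sub>R Vv \<eta> \<beta> d lam \<mu> i"
  proof (cases "i \<in> {1..d}")
    case True
    have s: "(\<Sum>j=1..d. (lam j)^2 * Vv \<eta> \<beta> d lam \<mu> j $ 1 $ 1) = 1"
    proof -
      have "(\<Sum>j=1..d. (lam j)^2 * Vv \<eta> \<beta> d lam \<mu> j $ 1 $ 1) = phi \<eta> \<beta> d lam \<mu>"
        unfolding phi_def by (rule sum.cong) (auto simp: Vv11 Pv_def power_mult_distrib)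
      then show ?thesis using ph by simp
    qed
    have "Df \<beta> (\<eta>*lam i) \<mu> > (\<eta>*lam i)^2" using D True by blast
    then have Dp: "Df \<beta> (\<eta>*lam i) \<mu> - (\<eta>*lam i)^2 \<noteq> 0" by simp
    have c: "\<eta>^2 * ((lam i)^2 * Vv \<eta> \<beta> d lam \<mu> i $ 1 $ 1 + 1) = Pv \<eta> \<beta> lam \<mu> i * Df \<beta> (\<eta>*lam i) \<mu>"
      using Dp True by (simp add: Vv11 Pv_def field_simps power_mult_distrib)
    have coef: "of_real (\<eta>^2) * (of_real ((lam i)^2) * Vv \<eta> \<beta> d lam \<mu> i $ 1 $ 1
                 + (\<Sum>j=1..d. of_real ((lam j)^2) * Vv \<eta> \<beta> d lam \<mu> j $ 1 $ 1)) = Pv \<eta> \<beta> lam \<mu> i * Df \<beta> (\<eta>*lam i) \<mu>"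
      using s c by simp
    have Vi: "Vv \<eta> \<beta> d lam \<mu> i = Vblk \<beta> (\<eta>*lam i) \<mu> (Pv \<eta> \<beta> lam \<mu> i)" using True by (simp add: Vv_def)
    show ?thesis
      unfolding T_in[OF True] coef unfolding Vi by (rule block_eig[OF mu])
  next
    case False then show ?thesis by (auto simp add: T_out Vv_def)
  qed
qed



lemma kf_pos_iff:
  assumes "\<mu> > 0" "\<beta> \<ge> 0"
  shows "kf \<beta> a \<mu> > 0 \<longleftrightarrow> (1-a+\<beta>)^2 * \<mu> < (\<mu>+\<beta>)^2"
proof -
  have p: "\<mu> + \<beta> > 0" using assms by simp
  have "kf \<beta> a \<mu> = ((\<mu>+\<beta>)^2 - (1-a+\<beta>)^2 * \<mu>) / (\<mu>+\<beta>)"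
    using p unfolding kf_def by (simp add: field_simps power2_eq_square)
  then show ?thesis using p by (simp add: divide_pos_pos zero_less_divide_iff)
qed

lemma kf_mono:
  assumes b: "\<beta> \<ge> 0" "\<beta> < \<mu>" "\<mu> < \<mu>'" and k: "kf \<beta> a \<mu> > 0"
  shows "kf \<beta> a \<mu> < kf \<beta> a \<mu>'"
proof -
  define s where "s = (1-a+\<beta>)^2"
  have s0: "s \<ge> 0" unfolding s_def by simp
  have mu0: "\<mu> > 0" using b by simp
  have p: "\<mu> + \<beta> > 0" "\<mu>' + \<beta> > 0" using b by auto
  have st1: "s * \<mu> < (\<mu>+\<beta>)^2" using kf_pos_iff[OF mu0 b(1)] k s_def by simp
  have "\<beta>^2 \<le> \<mu> * \<mu>'" using b by (metis le_less mult_mono' power2_eq_square order.trans less_imp_le)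
  then have st2: "(\<mu>+\<beta>)^2 * \<beta> \<le> (\<mu>+\<beta>)*(\<mu>'+\<beta>)*\<mu>"
  proof -
    have "(\<mu>+\<beta>)*(\<mu>'+\<beta>)*\<mu> - (\<mu>+\<beta>)^2 * \<beta> = (\<mu>+\<beta>) * (\<mu>*\<mu>' - \<beta>^2)"
      by (simp add: algebra_simps power2_eq_square)
    also have "\<dots> \<ge> 0" using p \<open>\<beta>^2 \<le> \<mu> * \<mu>'\<close> by simp
    finally show ?thesis by simp
  qed
  have st3: "s * \<beta> * \<mu> < (\<mu>+\<beta>)*(\<mu>'+\<beta>)*\<mu> \<or> \<beta> = 0"
  proof (cases "\<beta> = 0")
    case False
    then have "\<beta> > 0" using b by simp
    then have "s * \<mu> * \<beta> < (\<mu>+\<beta>)^2 * \<beta>" using st1 by simp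
    then show ?thesis using st2 by (simp add: mult.commute mult.left_commute)
  qed simp
  have st4: "s * \<beta> < (\<mu>+\<beta>)*(\<mu>'+\<beta>)"
  proof (cases "\<beta> = 0")
    case True then show ?thesis using p by simp
  next
    case False then have "s * \<beta> * \<mu> < (\<mu>+\<beta>)*(\<mu>'+\<beta>)*\<mu>" using st3 by simp
    then show ?thesis using mu0 by simp
  qed
  have eq: "kf \<beta> a \<mu>' - kf \<beta> a \<mu> = (\<mu>'-\<mu>) * ((\<mu>+\<beta>)*(\<mu>'+\<beta>) - s*\<beta>) / ((\<mu>+\<beta>)*(\<mu>'+\<beta>))"
    using p unfolding kf_def s_def[symmetric] by (simp add: field_simps)
  have "(\<mu>'-\<mu>) * ((\<mu>+\<beta>)*(\<mu>'+\<beta>) - s*\<beta>) / ((\<mu>+\<beta>)*(\<mu>'+\<beta>)) > 0"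
    using p st4 b by (intro divide_pos_pos mult_pos_pos) auto
  then show ?thesis using eq by simp
qed

lemma Df_mono:
  assumes b: "\<beta> \<ge> 0" "\<beta> < \<mu>" "\<mu> < \<mu>'" and D: "Df \<beta> a \<mu> > 0"
  shows "Df \<beta> a \<mu> < Df \<beta> a \<mu>'"
proof -
  have mu0: "\<mu> > 0" using b by simp
  have f1: "1 - \<beta>/\<mu> > 0" using b mu0 by (simp add: field_simps)
  have f2: "1 - \<beta>/\<mu> \<le> 1 - \<beta>/\<mu>'" using b mu0 by (simp add: frac_le)
  have k: "kf \<beta> a \<mu> > 0" using D f1 unfolding Df_def by (simp add: zero_less_mult_iff)
  have k2: "kf \<beta> a \<mu> < kf \<beta> a \<mu>'" by (rule kf_mono[OF b k])
  have "(1 - \<beta>/\<mu>) * kf \<beta> a \<mu> < (1 - \<beta>/\<mu>) * kf \<beta> a \<mu>'" using f1 k2 by simp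
  also have "\<dots> \<le> (1 - \<beta>/\<mu>') * kf \<beta> a \<mu>'" using f2 k k2 by (intro mult_right_mono) auto
  finally show ?thesis unfolding Df_def .
qed



fun mn :: "(nat \<Rightarrow> real \<Rightarrow> real) \<Rightarrow> nat \<Rightarrow> real \<Rightarrow> real" where
  "mn f 0 x = f 1 x"
| "mn f (Suc k) x = min (mn f k x) (f (Suc k) x)"

lemma mn_le: "j \<in> {1..k} \<Longrightarrow> mn f k x \<le> f j x"
  by (induction k) (auto simp: le_Suc_eq min.coboundedI1)

lemma mn_ex: "k \<ge> 1 \<Longrightarrow> \<exists>j\<in>{1..k}. mn f k x = f j x"
proof (induction k)
  case 0 then show ?case by simp
next
  case (Suc k)
  show ?case
  proof (cases "k = 0")
    case True then show ?thesis by simp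
  next
    case False
    then obtain j where j: "j \<in> {1..k}" "mn f k x = f j x" using Suc by auto
    show ?thesis
    proof (cases "mn f k x \<le> f (Suc k) x")
      case True then show ?thesis using j by (intro bexI[of _ j]) auto
    next
      case False then show ?thesis by (intro bexI[of _ "Suc k"]) auto
    qed
  qed
qed

lemma mn_cont: "(\<And>j. j \<ge> 1 \<Longrightarrow> continuous_on S (f j)) \<Longrightarrow> continuous_on S (mn f k)"
proof (induction k)
  case 0 then show ?case by simp
next
  case (Suc k)
  have "continuous_on S (\<lambda>x. min (mn f k x) (f (Suc k) x))"
    using Suc by (intro continuous_on_min) auto
  then show ?case by simp
qed

lemma Df_cont:
  assumes "S \<subseteq> {0<..}" "\<beta> \<ge> 0"
  shows "continuous_on S (Df \<beta> a)"
proof -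
  have "\<forall>x\<in>S. x \<noteq> 0 \<and> x + \<beta> \<noteq> 0" using assms by force
  then show ?thesis unfolding Df_def[abs_def] kf_def
    by (intro continuous_intros) auto
qed

lemma Df_upper:
  assumes "\<beta> \<ge> 0" "\<beta> < \<mu>"
  shows "Df \<beta> a \<mu> \<le> 2 * (\<mu> - \<beta>)"
proof -
  have mu: "\<mu> > 0" "\<mu> + \<beta> > 0" using assms by auto
  have k: "kf \<beta> a \<mu> \<le> \<mu> + \<beta>" unfolding kf_def using mu by simp
  have f: "0 \<le> 1 - \<beta>/\<mu>" using assms mu by (simp add: field_simps)
  have "Df \<beta> a \<mu> \<le> (1 - \<beta>/\<mu>) * (\<mu> + \<beta>)" unfolding Df_def using k f by (rule mult_left_mono)
  also have "\<dots> = (\<mu> - \<beta>) * ((\<mu> + \<beta>)/\<mu>)" using mu by (simp add: field_simps)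
  also have "\<dots> \<le> (\<mu> - \<beta>) * 2" using assms mu by (intro mult_left_mono) (auto simp: field_simps)
  finally show ?thesis by simp
qed

lemma Df_lower:
  assumes "\<beta> \<ge> 0" "\<beta> < 1" "1 \<le> \<mu>" "(1-a+\<beta>)^2 \<le> \<mu>"
  shows "Df \<beta> a \<mu> \<ge> (1 - \<beta>) * (\<mu> - (1-a+\<beta>)^2)"
proof -
  have mu: "\<mu> > 0" "\<mu> + \<beta> > 0" using assms by auto
  have "(1-a+\<beta>)^2 * \<mu> / (\<mu>+\<beta>) \<le> (1-a+\<beta>)^2"
    using mu assms by (simp add: divide_le_eq mult_left_mono)
  then have k: "kf \<beta> a \<mu> \<ge> \<mu> - (1-a+\<beta>)^2" unfolding kf_def using assms by simp
  have "\<beta> * 1 \<le> \<beta> * \<mu>" using assms by (intro mult_left_mono) auto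
  then have f: "1 - \<beta> \<le> 1 - \<beta>/\<mu>" using assms mu by (simp add: divide_le_eq)
  have "(1 - \<beta>) * (\<mu> - (1-a+\<beta>)^2) \<le> (1 - \<beta>) * kf \<beta> a \<mu>" using k assms by (intro mult_left_mono) auto
  also have "\<dots> \<le> (1 - \<beta>/\<mu>) * kf \<beta> a \<mu>" using f k assms by (intro mult_right_mono) auto
  finally show ?thesis unfolding Df_def .
qed

lemma Df_at1:
  assumes "\<beta> \<ge> 0"
  shows "Df \<beta> a 1 - a^2 = 2*a*(1-\<beta>^2-a)/(1+\<beta>)"
proof -
  have "1 + \<beta> \<noteq> 0" using assms by simp
  then show ?thesis unfolding Df_def kf_def by (simp add: field_simps) (simp add: algebra_simps power2_eq_square)
qed



lemma Df_up:
  assumes "\<beta> \<ge> 0" "\<beta> < \<mu>" "\<mu> \<le> \<mu>'" "a^2 < Df \<beta> a \<mu>"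
  shows "a^2 < Df \<beta> a \<mu>'"
proof (cases "\<mu> = \<mu>'")
  case False
  then have "\<mu> < \<mu>'" using assms by simp
  moreover have "Df \<beta> a \<mu> > 0" using assms(4) by (meson le_less_trans zero_le_power2)
  ultimately have "Df \<beta> a \<mu> < Df \<beta> a \<mu>'" using Df_mono assms by blast
  then show ?thesis using assms by simp
qed (use assms in simp)

lemma exists_root:
  assumes d: "d \<ge> 1" and b: "\<beta> \<ge> 0" "\<beta> < 1" and eta: "\<eta> > 0" and pos: "\<forall>j\<in>{1..d}. lam j > 0"
  shows "\<exists>r. \<beta> < r \<and> (\<forall>j\<in>{1..d}. (\<eta>*lam j)^2 < Df \<beta> (\<eta>*lam j) r) \<and> phi \<eta> \<beta> d lam r = 1"
proof -
  define a where "a = (\<lambda>j. \<eta>*lam j)"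
  have apos: "a j > 0" if "j \<in> {1..d}" for j using pos that eta unfolding a_def by simp
  define \<psi> where "\<psi> = (\<lambda>j \<mu>. (Df \<beta> (a j) \<mu> - (a j)^2)/(a j)^2)"
  define lo where "lo = \<beta> + (a 1)^2/2"
  define M where "M = 1 + (\<Sum>j=1..d. (1 - a j + \<beta>)^2 + (d+2)*(a j)^2/(1-\<beta>))"
  have one: "1 \<in> {1..d}" using d by simp
  have lo: "lo > \<beta>" unfolding lo_def using apos[OF one] by simp
  have terms_nn: "0 \<le> (1 - a j + \<beta>)^2 + (d+2)*(a j)^2/(1-\<beta>)" for j using b by simp
  have Mj: "M \<ge> 1 + ((1 - a j + \<beta>)^2 + (d+2)*(a j)^2/(1-\<beta>))" if "j \<in> {1..d}" for j
  proof -
    have "(1 - a j + \<beta>)^2 + (d+2)*(a j)^2/(1-\<beta>) \<le> (\<Sum>j=1..d. (1 - a j + \<beta>)^2 + (d+2)*(a j)^2/(1-\<beta>))"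
      by (rule member_le_sum) (use that terms_nn in auto)
    then show ?thesis unfolding M_def by simp
  qed
  have M1: "M \<ge> 1" unfolding M_def using terms_nn by (simp add: sum_nonneg)
  have "(a 1)^2/2 \<le> (d+2)*(a 1)^2/(1-\<beta>)"
  proof -
    have "(a 1)^2/2 \<le> (a 1)^2" by simp
    also have "\<dots> \<le> (a 1)^2 / (1-\<beta>)" using b by (simp add: le_divide_eq mult_left_le)
    also have "\<dots> \<le> (d+2)*(a 1)^2/(1-\<beta>)" using b mult_right_mono[of 1 "2 + real d" "(a 1)^2"] by (intro divide_right_mono) auto
    finally show ?thesis .
  qed
  then have loM: "lo \<le> M" using Mj[OF one] b zero_le_power2[of "1 - a 1 + \<beta>"] unfolding lo_def by linarith
  have psi1lo: "\<psi> 1 lo \<le> 0"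
  proof -
    have "Df \<beta> (a 1) lo \<le> 2 * (lo - \<beta>)" using Df_upper b lo by blast
    also have "\<dots> = (a 1)^2" unfolding lo_def by simp
    finally have "Df \<beta> (a 1) lo - (a 1)^2 \<le> 0" by simp
    then show ?thesis unfolding \<psi>_def by (intro divide_nonpos_nonneg) auto
  qed
  have psiM: "\<psi> j M \<ge> d+1" if "j \<in> {1..d}" for j
  proof -
    have s: "(1 - a j + \<beta>)^2 \<le> M" using Mj[OF that] terms_nn[of j] b by (smt (verit) divide_nonneg_pos zero_le_power2 of_nat_0_le_iff mult_nonneg_nonneg)
    have "Df \<beta> (a j) M \<ge> (1-\<beta>) * (M - (1 - a j + \<beta>)^2)" using Df_lower b M1 s by blast
    moreover have "M - (1 - a j + \<beta>)^2 \<ge> (d+2)*(a j)^2/(1-\<beta>)" using Mj[OF that] by simp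
    ultimately have "Df \<beta> (a j) M \<ge> (1-\<beta>) * ((d+2)*(a j)^2/(1-\<beta>))"
      by (smt (verit) b(2) mult_left_mono)
    then have "Df \<beta> (a j) M \<ge> (d+2)*(a j)^2" using b by simp
    then show ?thesis unfolding \<psi>_def using apos[OF that] by (simp add: le_divide_eq algebra_simps)
  qed
  have cont_psi: "continuous_on {lo..M} (\<psi> j)" for j
  proof -
    have "continuous_on {lo..M} (Df \<beta> (a j))" using lo b by (intro Df_cont) auto
    then show ?thesis unfolding \<psi>_def by (cases "a j = 0") (auto intro!: continuous_intros)
  qed
  have "mn \<psi> d lo \<le> 0" using mn_le[OF one] psi1lo by (meson order.trans)
  moreover have "mn \<psi> d M \<ge> 1/2" using mn_ex[OF d, of \<psi> M] psiM by force
  moreover have "continuous_on {lo..M} (mn \<psi> d)" by (intro mn_cont cont_psi)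
  ultimately obtain \<mu>1 where mu1: "lo \<le> \<mu>1" "\<mu>1 \<le> M" "mn \<psi> d \<mu>1 = 1/2"
    using IVT'[of "mn \<psi> d" lo "1/2" M] loM by auto
  have U1: "(a j)^2 < Df \<beta> (a j) \<mu>1" if "j \<in> {1..d}" for j
  proof -
    have "\<psi> j \<mu>1 \<ge> 1/2" using mn_le[OF that, of \<psi> \<mu>1] mu1 by simp
    then have "3 * (a j)^2 \<le> Df \<beta> (a j) \<mu>1 * 2" unfolding \<psi>_def using apos[OF that] by (simp add: le_divide_eq)
    moreover have "(a j)^2 > 0" using apos[OF that] by simp
    ultimately show ?thesis by linarith
  qed
  have Umu: "(a j)^2 < Df \<beta> (a j) \<mu>" if "j \<in> {1..d}" "\<mu>1 \<le> \<mu>" for j \<mu>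
    using Df_up[OF b(1) _ that(2) U1[OF that(1)]] lo mu1 by simp
  have terms_pos: "0 < (a j)^2 / (Df \<beta> (a j) \<mu> - (a j)^2)" if "j \<in> {1..d}" "\<mu>1 \<le> \<mu>" for j \<mu>
    using Umu[OF that] apos[OF that(1)] by simp
  obtain j0 where j0: "j0 \<in> {1..d}" "\<psi> j0 \<mu>1 = 1/2" using mn_ex[OF d, of \<psi> \<mu>1] mu1 by auto
  have "Df \<beta> (a j0) \<mu>1 - (a j0)^2 = (a j0)^2/2" using j0 apos[OF j0(1)] unfolding \<psi>_def by (simp add: field_simps)
  then have t2: "(a j0)^2 / (Df \<beta> (a j0) \<mu>1 - (a j0)^2) = 2" using apos[OF j0(1)] by (simp only:) simp
  have phi_def': "phi \<eta> \<beta> d lam \<mu> = (\<Sum>j=1..d. (a j)^2 / (Df \<beta> (a j) \<mu> - (a j)^2))" for \<mu>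
    unfolding phi_def a_def ..
  have ph1: "phi \<eta> \<beta> d lam \<mu>1 \<ge> 1"
  proof -
    have "2 \<le> (\<Sum>j=1..d. (a j)^2 / (Df \<beta> (a j) \<mu>1 - (a j)^2))"
      using member_le_sum[of j0 "{1..d}" "\<lambda>j. (a j)^2 / (Df \<beta> (a j) \<mu>1 - (a j)^2)"] j0 t2 terms_pos[of _ \<mu>1]
      by (simp add: less_imp_le)
    then show ?thesis unfolding phi_def' by simp
  qed
  have phM: "phi \<eta> \<beta> d lam M \<le> 1"
  proof -
    have "(a j)^2 / (Df \<beta> (a j) M - (a j)^2) \<le> 1 / real d" if "j \<in> {1..d}" for j
    proof -
      have "Df \<beta> (a j) M - (a j)^2 \<ge> d * (a j)^2"
      proof -
        have "real d * (a j)^2 + 2 * (a j)^2 \<le> Df \<beta> (a j) M"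
          using psiM[OF that] apos[OF that] unfolding \<psi>_def by (simp add: le_divide_eq algebra_simps)
        then show ?thesis using zero_le_power2[of "a j"] by linarith
      qed
      moreover have "d * (a j)^2 > 0" using d apos[OF that] by simp
      ultimately have "(a j)^2 / (Df \<beta> (a j) M - (a j)^2) \<le> (a j)^2 / (d * (a j)^2)"
        by (intro frac_le) auto
      also have "\<dots> = 1 / real d" using apos[OF that] by simp
      finally show ?thesis .
    qed
    then have "(\<Sum>j=1..d. (a j)^2 / (Df \<beta> (a j) M - (a j)^2)) \<le> of_nat (card {1..d}) * (1 / real d)"
      by (intro sum_bounded_above) auto
    then show ?thesis unfolding phi_def' using d by simp
  qed
  have cont_phi: "continuous_on {\<mu>1..M} (phi \<eta> \<beta> d lam)"
  proof -
    have "continuous_on {\<mu>1..M} (\<lambda>\<mu>. (\<Sum>j=1..d. (a j)^2 / (Df \<beta> (a j) \<mu> - (a j)^2)))"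
    proof (intro continuous_on_sum continuous_intros)
      fix j assume j: "j \<in> {1..d}"
      show "continuous_on {\<mu>1..M} (Df \<beta> (a j))" using lo mu1 b by (intro Df_cont) auto
      show "\<forall>x\<in>{\<mu>1..M}. Df \<beta> (a j) x - (a j)^2 \<noteq> 0" using Umu[OF j] by force
    qed
    then show ?thesis unfolding phi_def'[abs_def] .
  qed
  obtain r where r: "\<mu>1 \<le> r" "r \<le> M" "phi \<eta> \<beta> d lam r = 1"
    using IVT2'[of "phi \<eta> \<beta> d lam" M 1 \<mu>1] phM ph1 mu1 cont_phi by auto
  show ?thesis
    using r Umu lo mu1 unfolding a_def by (intro exI[of _ r]) auto
qed



lemma detr:
  fixes F M P u1 u2 :: real
  assumes "F > 0" "P > 0" "F*P - M^2 > 0"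
  shows "F * u1^2 + 2*M*u1*u2 + P * u2^2 \<ge> (F*P - M^2)/(F+P) * (u1^2+u2^2)"
proof -
  have id: "(F * u1^2 + 2*M*u1*u2 + P * u2^2)*(F+P) - (F*P - M^2)*(u1^2+u2^2) = (F * u1 + M * u2)^2 + (M*u1 + P * u2)^2"
    by (simp add: algebra_simps power2_eq_square)
  have "(F*P - M^2)*(u1^2+u2^2) \<le> (F * u1^2 + 2*M*u1*u2 + P * u2^2)*(F+P)"
    using id by (smt (verit) zero_le_power2)
  then show ?thesis using assms by (simp add: divide_le_eq mult.commute)
qed

lemma Vblk_pd:
  assumes b: "\<beta> \<ge> 0" "\<beta> < \<mu>" and D: "Df \<beta> a \<mu> > 0" and P: "P > 0"
  shows "\<exists>\<delta>>0. \<forall>x. x \<bullet> (Vblk \<beta> a \<mu> P *v x) \<ge> \<delta> * ((x$1)^2 + (x$2)^2)"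
proof -
  have mu: "\<mu> > 0" "\<mu> + \<beta> > 0" using b by auto
  have f1: "1 - \<beta>/\<mu> > 0" using b mu by (simp add: field_simps)
  have k: "kf \<beta> a \<mu> > 0" using D f1 unfolding Df_def by (simp add: zero_less_mult_iff)
  have kq: "(1-a+\<beta>)^2 * \<mu> < (\<mu>+\<beta>)^2" using kf_pos_iff[OF mu(1) b(1)] k by simp
  define F where "F = P/\<mu>"
  define M where "M = (1-a+\<beta>)*P/(\<mu>+\<beta>)"
  have F: "F > 0" unfolding F_def using P mu by simp
  have det: "F*P - M^2 = P^2 * ((\<mu>+\<beta>)^2 - (1-a+\<beta>)^2*\<mu>) / (\<mu>*(\<mu>+\<beta>)^2)"
    unfolding F_def M_def using mu by (simp add: field_simps) (simp add: algebra_simps power2_eq_square)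
  have detp: "F*P - M^2 > 0" unfolding det using kq P mu by (intro divide_pos_pos mult_pos_pos) auto
  define e where "e = (F*P - M^2)/(F+P)"
  have e: "e > 0" unfolding e_def using detp F P by simp
  show ?thesis
  proof (intro exI[of _ "e/3"] conjI allI)
    show "e/3 > 0" using e by simp
    fix x :: "real^2"
    define y where "y = x$1 - x$2"
    have q: "x \<bullet> (Vblk \<beta> a \<mu> P *v x) = F*(x$2)^2 + 2*M*(x$2)*y + P*y^2"
    proof -
      have "Vblk \<beta> a \<mu> P = mat2 P (M-P) (M-P) (F - 2*M + P)" unfolding Vblk_def F_def M_def ..
      then show ?thesis unfolding qf y_def by (simp add: algebra_simps power2_eq_square)
    qed
    have "F*(x$2)^2 + 2*M*(x$2)*y + P*y^2 \<ge> e * ((x$2)^2 + y^2)" unfolding e_def by (rule detr[OF F P detp])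
    moreover have "(x$1)^2 + (x$2)^2 \<le> 3 * ((x$2)^2 + y^2)"
    proof -
      have "3 * ((x$2)^2 + y^2) - ((x$1)^2 + (x$2)^2) = (x$2 - y)^2 + y^2" unfolding y_def by (simp add: algebra_simps power2_eq_square)
      then show ?thesis by (smt (verit) zero_le_power2)
    qed
    moreover have "e/3 * ((x$1)^2 + (x$2)^2) \<le> e/3 * (3 * ((x$2)^2 + y^2))"
      using calculation(2) e by (intro mult_left_mono) auto
    moreover have "e/3 * (3 * ((x$2)^2 + y^2)) = e * ((x$2)^2 + y^2)" by simp
    ultimately show "x \<bullet> (Vblk \<beta> a \<mu> P *v x) \<ge> e/3 * ((x$1)^2 + (x$2)^2)"
      unfolding q by linarith
  qed
qed



lemma zero_of_geom:
  fixes y K \<rho> :: real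
  assumes "\<And>n. \<bar>y\<bar> \<le> K * \<rho>^n" "0 \<le> \<rho>" "\<rho> < 1"
  shows "y = 0"
proof (rule ccontr)
  assume "y \<noteq> 0"
  then have y: "\<bar>y\<bar> > 0" by simp
  then have K: "K > 0" using assms(1)[of 0] by simp
  obtain n where "\<rho>^n < \<bar>y\<bar>/K" using real_arch_pow_inv[of "\<bar>y\<bar>/K" \<rho>] y K assms by auto
  then have "K * \<rho>^n < \<bar>y\<bar>" using K by (simp add: field_simps)
  then show False using assms(1)[of n] by simp
qed

lemma qlin: "(x::real^2) \<bullet> ((c *\<^sub>R A + e *\<^sub>R B) *v x) = c * (x \<bullet> (A *v x)) + e * (x \<bullet> (B *v x))"
  unfolding qf by (simp add: algebra_simps)

lemma T_lin:
  fixes X Y :: "nat \<Rightarrow> real^2^2"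
  shows "T_op \<eta> \<beta> d lam (\<lambda>i. c *\<^sub>R X i + e *\<^sub>R Y i) = (\<lambda>i. c *\<^sub>R T_op \<eta> \<beta> d lam X i + e *\<^sub>R T_op \<eta> \<beta> d lam Y i)"
proof
  fix i
  show "T_op \<eta> \<beta> d lam (\<lambda>i. c *\<^sub>R X i + e *\<^sub>R Y i) i = c *\<^sub>R T_op \<eta> \<beta> d lam X i + e *\<^sub>R T_op \<eta> \<beta> d lam Y i"
  proof (cases "i \<in> {1..d}")
    case True
    have s: "(\<Sum>j=1..d. (lam j)^2 * (c * X j $ 1 $ 1 + e * Y j $ 1 $ 1)) =
       c * (\<Sum>j=1..d. (lam j)^2 * X j $ 1 $ 1) + e * (\<Sum>j=1..d. (lam j)^2 * Y j $ 1 $ 1)"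
      by (simp add: sum.distrib sum_distrib_left algebra_simps)
    have s2: "(\<Sum>j=Suc 0..d. c * (X j $ 1 $ 1 * (lam j)^2) + e * (Y j $ 1 $ 1 * (lam j)^2)) =
       c * (\<Sum>j=Suc 0..d. X j $ 1 $ 1 * (lam j)^2) + e * (\<Sum>j=Suc 0..d. Y j $ 1 $ 1 * (lam j)^2)"
      by (simp add: sum.distrib sum_distrib_left algebra_simps)
    show ?thesis unfolding T_in[OF True] mat2_eq
      by (simp add: mm_nth Amat_def Qmat_def s) (simp add: algebra_simps s2)
  next
    case False then show ?thesis by (simp add: T_out)
  qed
qed

lemma sym_transpose: "W \<in> sym_space d \<Longrightarrow> transpose (W i) = W i"
  by (simp add: sym_space_def)
lemma sym_out: "W \<in> sym_space d \<Longrightarrow> i \<notin> {1..d} \<Longrightarrow> W i = 0"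
  by (simp add: sym_space_def)

lemma mm: "\<bar>z\<bar> \<le> c \<Longrightarrow> u \<le> v \<Longrightarrow> 0 \<le> u \<Longrightarrow> \<bar>z\<bar> * u \<le> (c::real) * v"
  by (meson abs_ge_zero mult_mono order_trans)

lemma eig_bound:
  fixes V :: "nat \<Rightarrow> real^2^2" and W :: "nat \<Rightarrow> complex^2^2"
  assumes V: "V \<in> psd_cone d" and TV: "T_op \<eta> \<beta> d lam V = (\<lambda>i. r *\<^sub>R V i)" and r: "r > 0"
    and pd: "\<forall>i\<in>{1..d}. \<exists>\<delta>>0. \<forall>x. x \<bullet> (V i *v x) \<ge> \<delta> * ((x$1)^2 + (x$2)^2)"
    and W: "W \<in> sym_space d" and nz: "\<exists>i. W i \<noteq> 0"
    and TW: "T_op \<eta> \<beta> d lam W = (\<lambda>i. smult2 \<mu> (W i))"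
  shows "cmod \<mu> \<le> r"
proof (rule ccontr)
  assume "\<not> cmod \<mu> \<le> r"
  then have mr: "cmod \<mu> > r" by simp
  then have m0: "\<mu> \<noteq> 0" "cmod \<mu> > 0" using r by auto
  define \<rho> where "\<rho> = r / cmod \<mu>"
  have \<rho>: "0 \<le> \<rho>" "\<rho> < 1" unfolding \<rho>_def using r mr m0 by (auto simp: divide_less_eq)
  define Z where "Z = (\<lambda>\<omega> i. re2 (smult2 \<omega> (W i)))"
  define Bd where "Bd = (\<lambda>C X. \<forall>i\<in>{1..d}. \<forall>x. \<bar>x \<bullet> (X i *v x)\<bar> \<le> C * (x \<bullet> (V i *v x)))"
  have Vsym: "V \<in> sym_space d" using V by (simp add: psd_cone_def)
  have Zsym: "Z \<omega> \<in> sym_space d" for \<omega>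
  proof -
    have "transpose (Z \<omega> i) = Z \<omega> i" for i
    proof -
      have "W i $ 1 $ 2 = W i $ 2 $ 1" using sym_transpose[OF W, of i] by (metis tr_nth)
      then show ?thesis unfolding Z_def mat2_eq by simp
    qed
    moreover have "i \<notin> {1..d} \<Longrightarrow> Z \<omega> i = 0" for i
      using sym_out[OF W] unfolding Z_def by (simp add: vec_eq_iff)
    ultimately show ?thesis by (simp add: sym_space_def)
  qed
  have TZ: "T_op \<eta> \<beta> d lam (Z \<omega>) = Z (\<omega> * \<mu>)" for \<omega>
    unfolding Z_def T_re TW by (simp add: fun_eq_iff vec_eq_iff mult.assoc)
  have Zscale: "Z (\<omega> * of_real t) = (\<lambda>i. t *\<^sub>R Z \<omega> i)" for \<omega> t
    unfolding Z_def by (simp add: vec_eq_iff fun_eq_iff algebra_simps)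
  have comb_psd: "(\<lambda>i. C *\<^sub>R V i + s *\<^sub>R X i) \<in> psd_cone d"
    if X: "X \<in> sym_space d" and B: "Bd C X" and s: "\<bar>s\<bar> = 1" for C s X
  proof -
    have "transpose (C *\<^sub>R V i + s *\<^sub>R X i) = C *\<^sub>R V i + s *\<^sub>R X i" for i
    proof -
      have "V i $1$2 = V i $2$1" using sym_transpose[OF Vsym, of i] by (metis tr_nth)
      moreover have "X i $1$2 = X i $2$1" using sym_transpose[OF X, of i] by (metis tr_nth)
      ultimately show ?thesis unfolding mat2_eq by simp
    qed
    moreover have "i \<notin> {1..d} \<Longrightarrow> C *\<^sub>R V i + s *\<^sub>R X i = 0" for i
      using sym_out[OF Vsym] sym_out[OF X] by simp
    moreover have "0 \<le> x \<bullet> ((C *\<^sub>R V i + s *\<^sub>R X i) *v x)" for i x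
    proof (cases "i \<in> {1..d}")
      case True
      have "\<bar>x \<bullet> (X i *v x)\<bar> \<le> C * (x \<bullet> (V i *v x))" using B True unfolding Bd_def by blast
      moreover have "s = 1 \<or> s = -1" using s by linarith
      ultimately show ?thesis unfolding qlin by auto
    next
      case False then show ?thesis using sym_out[OF Vsym] sym_out[OF X] by simp
    qed
    ultimately show ?thesis by (simp add: psd_cone_def sym_space_def)
  qed
  have step: "Bd (C*r) (T_op \<eta> \<beta> d lam X)" if X: "X \<in> sym_space d" and B: "Bd C X" for C X
  proof -
    have "0 \<le> x \<bullet> (((C*r) *\<^sub>R V i + s *\<^sub>R T_op \<eta> \<beta> d lam X i) *v x)" if "\<bar>s\<bar> = 1" for s i x
    proof -
      have "T_op \<eta> \<beta> d lam (\<lambda>i. C *\<^sub>R V i + s *\<^sub>R X i) \<in> psd_cone d"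
        by (rule T_psd) (use comb_psd[OF X B that] in auto)
      then have "0 \<le> x \<bullet> ((C *\<^sub>R T_op \<eta> \<beta> d lam V i + s *\<^sub>R T_op \<eta> \<beta> d lam X i) *v x)"
        unfolding T_lin by (simp add: psd_cone_def)
      then show ?thesis unfolding TV by simp
    qed
    from this[of 1] this[of "-1"] show ?thesis unfolding Bd_def qlin by (auto simp: abs_le_iff) (smt (verit))
  qed
  from pd obtain \<delta> where \<delta>: "\<forall>i\<in>{1..d}. \<delta> i > 0 \<and> (\<forall>x. x \<bullet> (V i *v x) \<ge> \<delta> i * ((x$1)^2 + (x$2)^2))"
    by metis
  define K where "K = (\<lambda>i. cmod (W i $1$1) + cmod (W i $1$2) + cmod (W i $2$1) + cmod (W i $2$2))"
  define C where "C = (\<Sum>i\<in>{1..d}. K i / \<delta> i)"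
  have base: "Bd C (Z \<omega>)" if w: "cmod \<omega> = 1" for \<omega>
    unfolding Bd_def
  proof (intro ballI allI)
    fix i and x :: "real^2" assume i: "i \<in> {1..d}"
    have dpos: "\<delta> i > 0" and dV: "\<delta> i * ((x$1)^2 + (x$2)^2) \<le> x \<bullet> (V i *v x)" using \<delta> i by auto
    have Knn: "0 \<le> K j / \<delta> j" if "j \<in> {1..d}" for j
    proof -
      have "\<delta> j > 0" using \<delta> that by blast
      moreover have "K j \<ge> 0" unfolding K_def by simp
      ultimately show ?thesis by simp
    qed
    have ent: "\<bar>Z \<omega> i $ a $ b\<bar> \<le> cmod (W i $ a $ b)" for a b
    proof -
      have "\<bar>Z \<omega> i $ a $ b\<bar> = \<bar>Re (\<omega> * W i $ a $ b)\<bar>" unfolding Z_def by simp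
      also have "\<dots> \<le> cmod (\<omega> * W i $ a $ b)" by (rule abs_Re_le_cmod)
      also have "\<dots> = cmod (W i $ a $ b)" using w by (simp add: norm_mult)
      finally show ?thesis .
    qed
    have x12: "\<bar>x$1 * x$2\<bar> \<le> (x$1)^2 + (x$2)^2"
    proof -
      have "2 * \<bar>x$1 * x$2\<bar> \<le> (x$1)^2 + (x$2)^2"
        using sum_squares_bound[of "\<bar>x$1\<bar>" "\<bar>x$2\<bar>"] by (simp add: abs_mult)
      then show ?thesis by (smt (verit) zero_le_power2)
    qed
    have "\<bar>x \<bullet> (Z \<omega> i *v x)\<bar> \<le> K i * ((x$1)^2 + (x$2)^2)"
    proof -
      let ?z = "Z \<omega> i"
      have qe: "x \<bullet> (?z *v x) = ?z$1$1 * (x$1)^2 + ?z$1$2 * (x$1*x$2) + ?z$2$1 * (x$1*x$2) + ?z$2$2 * (x$2)^2"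
        unfolding qf by (simp add: power2_eq_square algebra_simps)
      have a4: "\<bar>a + b + c + e\<bar> \<le> \<bar>a\<bar> + \<bar>b\<bar> + \<bar>c\<bar> + \<bar>e\<bar>" for a b c e :: real by arith
      have "\<bar>x \<bullet> (?z *v x)\<bar> \<le> \<bar>?z$1$1 * (x$1)^2\<bar> + \<bar>?z$1$2 * (x$1*x$2)\<bar> + \<bar>?z$2$1 * (x$1*x$2)\<bar> + \<bar>?z$2$2 * (x$2)^2\<bar>"
        unfolding qe by (rule a4)
      also have "\<dots> = \<bar>?z$1$1\<bar> * (x$1)^2 + \<bar>?z$1$2\<bar> * \<bar>x$1*x$2\<bar> + \<bar>?z$2$1\<bar> * \<bar>x$1*x$2\<bar> + \<bar>?z$2$2\<bar> * (x$2)^2"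
        by (simp only: abs_mult abs_power2)
      also have "\<dots> \<le> cmod (W i $1$1) * ((x$1)^2 + (x$2)^2) + cmod (W i $1$2) * ((x$1)^2 + (x$2)^2)
          + cmod (W i $2$1) * ((x$1)^2 + (x$2)^2) + cmod (W i $2$2) * ((x$1)^2 + (x$2)^2)"
      proof -
        have l1: "(x$1)^2 \<le> (x$1)^2 + (x$2)^2" "(x$2)^2 \<le> (x$1)^2 + (x$2)^2" by simp_all
        show ?thesis
          by (intro add_mono mm[OF ent l1(1)] mm[OF ent l1(2)] mm[OF ent x12]) simp_all
      qed
      finally show ?thesis unfolding K_def by (simp add: algebra_simps)
    qed
    also have "\<dots> = (K i / \<delta> i) * (\<delta> i * ((x$1)^2 + (x$2)^2))"
      using dpos by simp
    also have "\<dots> \<le> (K i / \<delta> i) * (x \<bullet> (V i *v x))"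
      by (rule mult_left_mono[OF dV Knn[OF i]])
    also have "\<dots> \<le> C * (x \<bullet> (V i *v x))"
    proof (intro mult_right_mono)
      show "K i / \<delta> i \<le> C" unfolding C_def using i Knn
        by (intro member_le_sum) auto
      show "0 \<le> x \<bullet> (V i *v x)" using V by (simp add: psd_cone_def)
    qed
    finally show "\<bar>x \<bullet> (Z \<omega> i *v x)\<bar> \<le> C * (x \<bullet> (V i *v x))" .
  qed
  have ind: "\<forall>\<omega>. cmod \<omega> = 1 \<longrightarrow> Bd (C * \<rho>^n) (Z \<omega>)" for n
  proof (induction n)
    case 0 then show ?case using base by simp
  next
    case (Suc n)
    show ?case
    proof (intro allI impI)
      fix \<omega> :: complex assume w: "cmod \<omega> = 1"
      define \<omega>' where "\<omega>' = \<omega> * of_real (cmod \<mu>) / \<mu>"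
      have w': "cmod \<omega>' = 1" unfolding \<omega>'_def using w m0 by (simp add: norm_mult norm_divide)
      have e: "\<omega>' * \<mu> = \<omega> * of_real (cmod \<mu>)" unfolding \<omega>'_def using m0 by simp
      have T': "T_op \<eta> \<beta> d lam (Z \<omega>') = (\<lambda>i. cmod \<mu> *\<^sub>R Z \<omega> i)" unfolding TZ e Zscale ..
      have "Bd (C * \<rho>^n * r) (T_op \<eta> \<beta> d lam (Z \<omega>'))"
        using step[OF Zsym] Suc w' by blast
      then have B: "Bd (C * \<rho>^n * r) (\<lambda>i. cmod \<mu> *\<^sub>R Z \<omega> i)" unfolding T' .
      show "Bd (C * \<rho>^Suc n) (Z \<omega>)" unfolding Bd_def
      proof (intro ballI allI)
        fix i and x :: "real^2" assume i: "i \<in> {1..d}"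
        have "\<bar>cmod \<mu> * (x \<bullet> (Z \<omega> i *v x))\<bar> \<le> C * \<rho>^n * r * (x \<bullet> (V i *v x))"
          using B i unfolding Bd_def by (simp add: scaleR_matrix_vector_assoc[symmetric])
        then have "cmod \<mu> * \<bar>x \<bullet> (Z \<omega> i *v x)\<bar> \<le> cmod \<mu> * (C * \<rho>^Suc n * (x \<bullet> (V i *v x)))"
          unfolding \<rho>_def using m0 by (simp add: abs_mult field_simps)
        then show "\<bar>x \<bullet> (Z \<omega> i *v x)\<bar> \<le> C * \<rho>^Suc n * (x \<bullet> (V i *v x))"
          using m0 by simp
      qed
    qed
  qed
  have Zz: "Z \<omega> i = 0" if w: "cmod \<omega> = 1" and i: "i \<in> {1..d}" for \<omega> i
  proof -
    have q0: "x \<bullet> (Z \<omega> i *v x) = 0" for x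
    proof (rule zero_of_geom[OF _ \<rho>, of _ "C * (x \<bullet> (V i *v x))"])
      fix n
      have "\<bar>x \<bullet> (Z \<omega> i *v x)\<bar> \<le> C * \<rho>^n * (x \<bullet> (V i *v x))" using ind[of n] w i unfolding Bd_def by blast
      then show "\<bar>x \<bullet> (Z \<omega> i *v x)\<bar> \<le> C * (x \<bullet> (V i *v x)) * \<rho>^n" by (simp add: mult_ac)
    qed
    obtain e1 :: "real^2" where e1: "e1$1 = 1" "e1$2 = 0" using vec2_ex by blast
    obtain e2 :: "real^2" where e2: "e2$1 = 0" "e2$2 = 1" using vec2_ex by blast
    obtain e3 :: "real^2" where e3: "e3$1 = 1" "e3$2 = 1" using vec2_ex by blast
    have "transpose (Z \<omega> i) $1$2 = Z \<omega> i $1$2" using sym_transpose[OF Zsym, of \<omega> i] by simp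
    then have "Z \<omega> i $1$2 = Z \<omega> i $2$1" by simp
    moreover have "Z \<omega> i $1$1 = 0" using q0[of e1] unfolding qf by (simp add: e1)
    moreover have "Z \<omega> i $2$2 = 0" using q0[of e2] unfolding qf by (simp add: e2)
    moreover have "Z \<omega> i $1$1 + Z \<omega> i $1$2 + Z \<omega> i $2$1 + Z \<omega> i $2$2 = 0" using q0[of e3] unfolding qf by (simp add: e3)
    ultimately show ?thesis unfolding mat2_eq by simp
  qed
  have "W i = 0" for i
  proof (cases "i \<in> {1..d}")
    case True
    have "Re (W i $ a $ b) = 0" "Im (W i $ a $ b) = 0" for a b
    proof -
      have "Z 1 i $ a $ b = 0" "Z (- \<i>) i $ a $ b = 0" using Zz[OF _ True, of 1] Zz[OF _ True, of "- \<i>"] by auto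
      then show "Re (W i $ a $ b) = 0" "Im (W i $ a $ b) = 0" unfolding Z_def by auto
    qed
    then show ?thesis by (simp add: vec_eq_iff complex_eq_iff)
  next
    case False then show ?thesis using sym_out[OF W] by simp
  qed
  then show False using nz by simp
qed



lemma phi_dec:
  assumes b: "\<beta> \<ge> 0" "\<beta> < \<mu>" "\<mu> < \<mu>'" and d: "d \<ge> 1"
    and U: "\<forall>j\<in>{1..d}. (\<eta>*lam j)^2 < Df \<beta> (\<eta>*lam j) \<mu>"
    and pos: "\<forall>j\<in>{1..d}. \<eta>*lam j \<noteq> 0"
  shows "phi \<eta> \<beta> d lam \<mu>' < phi \<eta> \<beta> d lam \<mu>"
  unfolding phi_def
proof (rule sum_strict_mono)
  show "finite {1..d}" by simp
  show "{1..d} \<noteq> {}" using d by simp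
  fix j assume j: "j \<in> {1..d}"
  let ?a = "\<eta>*lam j"
  have D: "?a^2 < Df \<beta> ?a \<mu>" using U j by blast
  have "Df \<beta> ?a \<mu> > 0" using D by (meson le_less_trans zero_le_power2)
  then have "Df \<beta> ?a \<mu> < Df \<beta> ?a \<mu>'" using Df_mono b by blast
  moreover have "?a^2 > 0" using pos j by simp
  ultimately show "?a^2 / (Df \<beta> ?a \<mu>' - ?a^2) < ?a^2 / (Df \<beta> ?a \<mu> - ?a^2)"
    using D by (intro divide_strict_left_mono) auto
qed

lemma Df_le:
  assumes "\<beta> \<ge> 0" "\<beta> < \<mu>"
  shows "Df \<beta> a \<mu> \<le> \<mu>"
proof -
  have mu: "\<mu> > 0" "\<mu> + \<beta> > 0" using assms by auto
  have "Df \<beta> a \<mu> = (\<mu>^2 - \<beta>^2)/\<mu> - (1-a+\<beta>)^2 * (\<mu>-\<beta>)/(\<mu>+\<beta>)"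
    unfolding Df_def kf_def using mu by (simp add: field_simps) (simp add: algebra_simps power2_eq_square)
  also have "\<dots> \<le> (\<mu>^2 - \<beta>^2)/\<mu>" using assms mu by simp
  also have "\<dots> \<le> \<mu>" using mu by (simp add: divide_le_eq power2_eq_square)
  finally show ?thesis .
qed

lemma S_term:
  assumes b: "\<beta> \<ge> 0" "\<beta> < 1" and a: "a > 0" "a < 1 - \<beta>^2"
  shows "a / (2 * (1 - \<beta>) * (1 - a / (1 - \<beta>^2))) = a^2 / (Df \<beta> a 1 - a^2)"
proof -
  define c where "c = 1 - \<beta>^2"
  have c: "c > 0" "c - a > 0" using a unfolding c_def by auto
  have cf: "c = (1-\<beta>)*(1+\<beta>)" unfolding c_def by (simp add: algebra_simps power2_eq_square)
  have nz: "1 - \<beta> > 0" "1 + \<beta> > 0" using b by auto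
  have e: "2 * (1 - \<beta>) * (1 - a / c) = 2*(c-a)/(1+\<beta>)"
  proof -
    have "1 - \<beta> = c/(1+\<beta>)" using cf nz by (simp add: field_simps)
    then show ?thesis using nz c by (simp add: field_simps) (simp add: c_def algebra_simps power2_eq_square)
  qed
  have "a / (2 * (1 - \<beta>) * (1 - a / c)) = a * (1+\<beta>) / (2 * (c - a))"
    unfolding e using nz c by (simp add: field_simps)
  then have L: "a / (2 * (1 - \<beta>) * (1 - a / c)) = a * (1+\<beta>) / (2 * (c - a))" .
  have dd: "Df \<beta> a 1 - a^2 = 2*a*(c-a)/(1+\<beta>)" unfolding Df_at1[OF b(1)] c_def by simp
  have R: "a^2 / (Df \<beta> a 1 - a^2) = a * (1+\<beta>) / (2 * (c - a))"
    unfolding dd using a c nz by (simp add: field_simps power2_eq_square)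
  show ?thesis using L R unfolding c_def by simp
qed



theorem theoremA2:
  fixes d :: nat and \<eta> \<beta> :: real and lam :: "nat \<Rightarrow> real"
  assumes "d \<ge> 1" and "\<eta> > 0" and "0 \<le> \<beta>" and "\<beta> < 1"
    and "\<And>i j. 1 \<le> i \<Longrightarrow> i \<le> j \<Longrightarrow> j \<le> d \<Longrightarrow> lam j \<le> lam i"
    and "lam d > 0"
  shows "(\<forall>W \<in> psd_cone d. T_op \<eta> \<beta> d lam W \<in> psd_cone d)
    \<and> (\<exists>Ws \<in> psd_cone d. (\<exists>i. Ws i \<noteq> 0)
         \<and> T_op \<eta> \<beta> d lam Ws = (\<lambda>i. spectral_radius_T \<eta> \<beta> d lam *\<^sub>R Ws i)
         \<and> (\<Sum>i=1..d. Ws i $ 1 $ 1) > 0)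
    \<and> spectral_radius_T \<eta> \<beta> d lam \<ge> \<eta>^2 * (\<Sum>i=1..d. (lam i)^2)
    \<and> \<eta>^2 * (\<Sum>i=1..d. (lam i)^2) > 0
    \<and> (spectral_radius_T \<eta> \<beta> d lam = 1 \<longleftrightarrow>
         \<eta> * lam 1 < 1 - \<beta>^2 \<and> S_fun \<eta> \<beta> d lam = 1)
    \<and> (spectral_radius_T \<eta> \<beta> d lam < 1 \<longleftrightarrow>
         \<eta> * lam 1 < 1 - \<beta>^2 \<and> S_fun \<eta> \<beta> d lam < 1)"
proof -
  note d = assms(1) and eta = assms(2) and b = assms(3) assms(4)
  have lampos: "lam j > 0" if "j \<in> {1..d}" for j
    using assms(5)[of j d] assms(6) that by fastforce
  have lam1: "lam j \<le> lam 1" if "j \<in> {1..d}" for j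
    using assms(5)[of 1 j] that by auto
  have apos: "\<eta> * lam j > 0" if "j \<in> {1..d}" for j using lampos[OF that] eta by simp
  obtain r where r: "\<beta> < r" and Dc: "\<forall>j\<in>{1..d}. (\<eta>*lam j)^2 < Df \<beta> (\<eta>*lam j) r"
      and ph: "phi \<eta> \<beta> d lam r = 1"
    using exists_root[OF d b eta] lampos by blast
  have r0: "r > 0" using r b by simp
  define V where "V = Vv \<eta> \<beta> d lam r"
  have TV: "T_op \<eta> \<beta> d lam V = (\<lambda>i. r *\<^sub>R V i)"
    unfolding V_def by (rule T_Vv[OF r0 b(1) Dc ph])
  have Ppos: "Pv \<eta> \<beta> lam r i > 0" if "i \<in> {1..d}" for i
  proof -
    have "(\<eta>*lam i)^2 < Df \<beta> (\<eta>*lam i) r" using Dc that by blast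
    then show ?thesis unfolding Pv_def using eta by simp
  qed
  have Vi: "V i = Vblk \<beta> (\<eta>*lam i) r (Pv \<eta> \<beta> lam r i)" if "i \<in> {1..d}" for i
    using that unfolding V_def Vv_def by simp
  have Vo: "V i = 0" if "i \<notin> {1..d}" for i
    using that unfolding V_def Vv_def by auto
  have pdV: "\<forall>i\<in>{1..d}. \<exists>\<delta>>0. \<forall>x. x \<bullet> (V i *v x) \<ge> \<delta> * ((x$1)^2 + (x$2)^2)"
  proof
    fix i assume i: "i \<in> {1..d}"
    have "(\<eta>*lam i)^2 < Df \<beta> (\<eta>*lam i) r" using Dc i by blast
    then have "Df \<beta> (\<eta>*lam i) r > 0" by (meson le_less_trans zero_le_power2)
    then show "\<exists>\<delta>>0. \<forall>x. x \<bullet> (V i *v x) \<ge> \<delta> * ((x$1)^2 + (x$2)^2)"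
      unfolding Vi[OF i] using Vblk_pd[OF b(1) r _ Ppos[OF i]] by blast
  qed
  have Vsym: "transpose (V i) = V i" for i
  proof (cases "i \<in> {1..d}")
    case True then show ?thesis unfolding Vi[OF True] mat2_eq by (simp add: Vblk_def)
  next
    case False then show ?thesis using Vo by (simp add: vec_eq_iff transpose_def)
  qed
  have Vpsd: "V \<in> psd_cone d"
  proof -
    have "0 \<le> x \<bullet> (V i *v x)" for i x
    proof (cases "i \<in> {1..d}")
      case True
      then obtain \<delta> where "\<delta> > 0" "\<forall>x. x \<bullet> (V i *v x) \<ge> \<delta> * ((x$1)^2 + (x$2)^2)" using pdV by blast
      moreover have "\<delta> * ((x$1)^2 + (x$2)^2) \<ge> 0" using \<open>\<delta> > 0\<close> by simp
      ultimately show ?thesis by (meson order.trans)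
    next
      case False then show ?thesis using Vo by simp
    qed
    then show ?thesis unfolding psd_cone_def sym_space_def using Vsym Vo by auto
  qed
  have one: "1 \<in> {1..d}" using d by simp
  have V11: "V i $ 1 $ 1 = Pv \<eta> \<beta> lam r i" if "i \<in> {1..d}" for i
    unfolding Vi[OF that] by (simp add: Vblk_def)
  have Vnz: "V 1 \<noteq> 0" using V11[OF one] Ppos[OF one] by auto
  define E where "E = {cmod \<mu> | \<mu>. \<exists>W :: nat \<Rightarrow> complex^2^2.
      W \<in> sym_space d \<and> (\<exists>i. W i \<noteq> 0) \<and> T_op \<eta> \<beta> d lam W = (\<lambda>i. smult2 \<mu> (W i))}"
  have rE: "r \<in> E"
  proof -
    let ?W = "\<lambda>i. cx2 (V i)"
    have "?W \<in> sym_space d"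
    proof -
      have "transpose (?W i) = ?W i" for i
      proof -
        have "V i $ 1 $ 2 = V i $ 2 $ 1" using Vsym[of i] by (metis tr_nth)
        then show ?thesis unfolding mat2_eq by simp
      qed
      moreover have "i \<notin> {1..d} \<Longrightarrow> ?W i = 0" for i using Vo by (simp add: vec_eq_iff)
      ultimately show ?thesis by (simp add: sym_space_def)
    qed
    moreover have "?W 1 \<noteq> 0"
    proof
      assume "?W 1 = 0"
      then have "cx2 (V 1) $ 1 $ 1 = 0" by simp
      then show False using V11[OF one] Ppos[OF one] by simp
    qed
    moreover have "T_op \<eta> \<beta> d lam ?W = (\<lambda>i. smult2 (complex_of_real r) (?W i))"
      unfolding T_cx TV by (simp add: fun_eq_iff vec_eq_iff)
    ultimately show ?thesis unfolding E_def using r0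
      by (intro CollectI exI[of _ "complex_of_real r"]) (auto intro!: exI[of _ ?W])
  qed
  have ub: "x \<le> r" if "x \<in> E" for x
  proof -
    obtain \<mu> W where x: "x = cmod \<mu>" and W: "W \<in> sym_space d" "\<exists>i. W i \<noteq> 0"
      "T_op \<eta> \<beta> d lam W = (\<lambda>i. smult2 \<mu> (W i))" using \<open>x \<in> E\<close> unfolding E_def by blast
    show ?thesis unfolding x by (rule eig_bound[OF Vpsd TV r0 pdV W])
  qed
  have SR: "spectral_radius_T \<eta> \<beta> d lam = r"
  proof -
    have "spectral_radius_T \<eta> \<beta> d lam = Sup E" unfolding spectral_radius_T_def E_def ..
    also have "\<dots> = r" by (rule cSup_eq_maximum[OF rE ub])
    finally show ?thesis .
  qed
  have lb: "\<eta>^2 * (\<Sum>i=1..d. (lam i)^2) \<le> r"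
  proof -
    have t: "(\<eta>*lam j)^2 \<le> r * ((\<eta>*lam j)^2 / (Df \<beta> (\<eta>*lam j) r - (\<eta>*lam j)^2))" if j: "j \<in> {1..d}" for j
    proof -
      let ?a = "\<eta>*lam j" and ?D = "Df \<beta> (\<eta>*lam j) r"
      have D: "?a^2 < ?D" using Dc j by blast
      have Dr: "?D \<le> r" using Df_le[OF b(1) r] .
      have "?a^2 = (?D - ?a^2) * (?a^2 / (?D - ?a^2))" using D by simp
      also have "\<dots> \<le> r * (?a^2 / (?D - ?a^2))"
      proof (rule mult_right_mono)
        show "?D - ?a^2 \<le> r" using Dr zero_le_power2[of ?a] by linarith
        show "0 \<le> ?a^2 / (?D - ?a^2)" using D by simp
      qed
      finally show ?thesis .
    qed
    have "\<eta>^2 * (\<Sum>i=1..d. (lam i)^2) = (\<Sum>j=1..d. (\<eta>*lam j)^2)"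
      by (simp add: sum_distrib_left power_mult_distrib)
    also have "\<dots> \<le> (\<Sum>j=1..d. r * ((\<eta>*lam j)^2 / (Df \<beta> (\<eta>*lam j) r - (\<eta>*lam j)^2)))"
      using t by (rule sum_mono)
    also have "\<dots> = r * phi \<eta> \<beta> d lam r" unfolding phi_def by (simp add: sum_distrib_left)
    finally show ?thesis using ph by simp
  qed
  have pos: "\<eta>^2 * (\<Sum>i=1..d. (lam i)^2) > 0"
  proof -
    have "(\<Sum>i=1..d. (lam i)^2) > 0"
    proof (rule sum_pos)
      show "finite {1..d}" "{1..d} \<noteq> {}" using d by auto
      fix i assume "i \<in> {1..d}" then show "(lam i)^2 > 0" using lampos[of i] by simp
    qed
    then show ?thesis using eta by simp
  qed
  have sumpos: "(\<Sum>i=1..d. V i $ 1 $ 1) > 0"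
    using d V11 Ppos by (intro sum_pos) auto
  define C1 where "C1 = (\<eta> * lam 1 < 1 - \<beta>^2)"
  have small: "\<eta> * lam j < 1 - \<beta>^2" if C1 "j \<in> {1..d}" for j
  proof -
    have "\<eta> * lam j \<le> \<eta> * lam 1" using lam1[OF that(2)] eta by simp
    then show ?thesis using that(1) unfolding C1_def by simp
  qed
  have U1: "\<forall>j\<in>{1..d}. (\<eta>*lam j)^2 < Df \<beta> (\<eta>*lam j) 1" if C1
  proof
    fix j assume j: "j \<in> {1..d}"
    have p1: "2*(\<eta>*lam j) > 0" using apos[OF j] by simp
    have p2: "1-\<beta>^2-\<eta>*lam j > 0" using small[OF that j] by simp
    have "2*(\<eta>*lam j)*(1-\<beta>^2-\<eta>*lam j) > 0" by (rule mult_pos_pos[OF p1 p2])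
    then have "2*(\<eta>*lam j)*(1-\<beta>^2-\<eta>*lam j)/(1+\<beta>) > 0"
      using b by (intro divide_pos_pos) auto
    then show "(\<eta>*lam j)^2 < Df \<beta> (\<eta>*lam j) 1" using Df_at1[OF b(1), of "\<eta>*lam j"] by simp
  qed
  have U1c: C1 if "\<forall>j\<in>{1..d}. (\<eta>*lam j)^2 < Df \<beta> (\<eta>*lam j) 1"
  proof -
    have "(\<eta>*lam 1)^2 < Df \<beta> (\<eta>*lam 1) 1" using that one by blast
    then have "0 < Df \<beta> (\<eta>*lam 1) 1 - (\<eta>*lam 1)^2" by simp
    then have "0 < 2*(\<eta>*lam 1)*(1-\<beta>^2-\<eta>*lam 1)/(1+\<beta>)"
      unfolding Df_at1[OF b(1), of "\<eta>*lam 1"] .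
    then have "0 < 2*(\<eta>*lam 1)*(1-\<beta>^2-\<eta>*lam 1)" using b by (simp add: zero_less_divide_iff)
    then show ?thesis unfolding C1_def using apos[OF one] by (smt (verit) zero_less_mult_iff)
  qed
  have Sphi: "S_fun \<eta> \<beta> d lam = phi \<eta> \<beta> d lam 1" if C1
    unfolding S_fun_def phi_def
    by (rule sum.cong) (use S_term[OF b] small[OF that] apos in auto)
  have apos': "\<forall>j\<in>{1..d}. \<eta>*lam j \<noteq> 0" using apos by force
  have bc: "(r = 1 \<longleftrightarrow> C1 \<and> S_fun \<eta> \<beta> d lam = 1) \<and> (r < 1 \<longleftrightarrow> C1 \<and> S_fun \<eta> \<beta> d lam < 1)"
  proof (cases r "1::real" rule: linorder_cases)
    case less
    have "\<forall>j\<in>{1..d}. (\<eta>*lam j)^2 < Df \<beta> (\<eta>*lam j) 1"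
      using Df_up[OF b(1) r] less Dc by (meson less_imp_le)
    then have c1: C1 by (rule U1c)
    have "phi \<eta> \<beta> d lam 1 < phi \<eta> \<beta> d lam r" by (rule phi_dec[OF b(1) r less d Dc apos'])
    then show ?thesis using Sphi[OF c1] c1 ph less by auto
  next
    case equal
    then have c1: C1 using U1c Dc by simp
    then show ?thesis using Sphi[OF c1] ph equal by auto
  next
    case greater
    have "\<not> (C1 \<and> S_fun \<eta> \<beta> d lam \<le> 1)"
    proof
      assume c: "C1 \<and> S_fun \<eta> \<beta> d lam \<le> 1"
      have "phi \<eta> \<beta> d lam r < phi \<eta> \<beta> d lam 1"
        by (rule phi_dec[OF b(1) _ greater d U1[OF conjunct1[OF c]] apos']) (use b in simp)
      then show False using c Sphi ph by auto
    qed
    then show ?thesis using greater by auto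
  qed
  show ?thesis
    unfolding SR using T_psd Vpsd Vnz TV sumpos lb pos bc unfolding C1_def by blast
qed


end
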